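(* Let $b \ge 1$ be an integer and let $L_{1,b} = \{C_{1,1}, C_{2,1}\} \cup \{C_{1,j} : 1 < j \le b+1\}$, of size $n = b+2$. Then on the $n \times n$ board, $2 \le \mathrm{cp}_{\mathrm{free}}(L_{1,b}) \le 4$.
   Context: For integers $i,j$, $C_{i,j}$ denotes the unit square cell in column $i$ and row $j$ of the integer grid (columns numbered left to right, rows numbered top to bottom). A polyomino is a finite set of cells; its size is its number of cells. For a polyomino $\mathcal{P}$ of size $n$ the board is $\mathbb{B} = \{C_{i,j} : 1 \le i,j \le n\}$. The shift of $\mathcal{P}$ by integers $(c,d)$ is $\mathcal{P}+(c,d) = \{C_{x+c,y+d} : C_{x,y} \in \mathcal{P}\}$. For $0<a\le b$ and $L_{a,b} = \{C_{i,1} : 1 \le i \le a+1\} \cup \{C_{1,j} : 1 < j \le b+1\}$, the rotations by $90^\circ, 180^\circ, 270^\circ$ clockwise are $LR_{a,b} = \{C_{i,1} : 1 \le i \le b+1\} \cup \{C_{b+1,j} : 1 \le j \le a+1\}$, $LR^2_{a,b} = \{C_{i,b+1} : 1 \le i \le a+1\} \cup \{C_{a+1,j} : 1 \le j \le b+1\}$, $LR^3_{a,b} = \{C_{i,a+1} : 1 \le i \le b+1\} \cup \{C_{1,j} : 1 \le j \le a+1\}$ (reflections are not allowed). A free copy of $L_{a,b}$ is any shift of one of these four. A set of polyominoes is a valid arrangement if each is contained in $\mathbb{B}$ and they are pairwise disjoint. A free packing of $\mathcal{P}$ is a set of free copies of $\mathcal{P}$ forming a valid arrangement such that adding any further free copy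 of $\mathcal{P}$ yields an invalid arrangement. The clumsy free packing number $\mathrm{cp}_{\mathrm{free}}(\mathcal{P})$ is the minimum number of polyominoes in a free packing of $\mathcal{P}$ on the $n \times n$ board. *)

theory Defs
  imports Main
begin

text \<open>A cell C_{i,j} (column i, row j) is represented by the pair (i, j) :: int \<times> int.
  A polyomino is a finite set of cells.\<close>

type_synonym cell = "int \<times> int"
type_synonym polyomino = "cell set"

definition board :: "nat \<Rightarrow> polyomino" where
  "board n = {(i, j). 1 \<le> i \<and> i \<le> int n \<and> 1 \<le> j \<and> j \<le> int n}"

definition shift :: "polyomino \<Rightarrow> int \<Rightarrow> int \<Rightarrow> polyomino" where
  "shift P c d = {(x + c, y + d) | x y. (x, y) \<in> P}"

definition Lpoly :: "int \<Rightarrow> int \<Rightarrow> polyomino" where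
  "Lpoly a b = {(i, 1) | i. 1 \<le> i \<and> i \<le> a + 1} \<union> {(1, j) | j. 1 < j \<and> j \<le> b + 1}"

definition LR1 :: "int \<Rightarrow> int \<Rightarrow> polyomino" where
  "LR1 a b = {(i, 1) | i. 1 \<le> i \<and> i \<le> b + 1} \<union> {(b + 1, j) | j. 1 \<le> j \<and> j \<le> a + 1}"

definition LR2 :: "int \<Rightarrow> int \<Rightarrow> polyomino" where
  "LR2 a b = {(i, b + 1) | i. 1 \<le> i \<and> i \<le> a + 1} \<union> {(a + 1, j) | j. 1 \<le> j \<and> j \<le> b + 1}"

definition LR3 :: "int \<Rightarrow> int \<Rightarrow> polyomino" where
  "LR3 a b = {(i, a + 1) | i. 1 \<le> i \<and> i \<le> b + 1} \<union> {(1, j) | j. 1 \<le> j \<and> j \<le> a + 1}"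

text \<open>Free copies of L_{a,b}: shifts of one of its four rotations (no reflections).\<close>
definition free_copies_L :: "int \<Rightarrow> int \<Rightarrow> polyomino set" where
  "free_copies_L a b = {shift R c d | R c d. R \<in> {Lpoly a b, LR1 a b, LR2 a b, LR3 a b}}"

definition valid_arrangement :: "nat \<Rightarrow> polyomino set \<Rightarrow> bool" where
  "valid_arrangement n S \<longleftrightarrow>
     (\<forall>P\<in>S. P \<subseteq> board n) \<and> (\<forall>P\<in>S. \<forall>Q\<in>S. P \<noteq> Q \<longrightarrow> P \<inter> Q = {})"

definition free_packing_L :: "int \<Rightarrow> int \<Rightarrow> polyomino set \<Rightarrow> bool" where
  "free_packing_L a b S \<longleftrightarrow>
     (let n = card (Lpoly a b) in
       S \<subseteq> free_copies_L a b \<and> valid_arrangement n S \<and>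
       (\<forall>Q\<in>free_copies_L a b. Q \<notin> S \<longrightarrow> \<not> valid_arrangement n (insert Q S)))"

definition cp_free_L :: "int \<Rightarrow> int \<Rightarrow> nat" where
  "cp_free_L a b = (LEAST k. \<exists>S. free_packing_L a b S \<and> card S = k)"

end

theory Submission
  imports Defs
begin

lemma mem_shift: "(x, y) \<in> shift P c d \<longleftrightarrow> (x - c, y - d) \<in> P"
  unfolding shift_def by force

lemma memL: "(x, y) \<in> Lpoly a b \<longleftrightarrow> (y = 1 \<and> 1 \<le> x \<and> x \<le> a + 1) \<or> (x = 1 \<and> 1 < y \<and> y \<le> b + 1)"
  unfolding Lpoly_def by auto

lemma memR1: "(x, y) \<in> LR1 a b \<longleftrightarrow> (y = 1 \<and> 1 \<le> x \<and> x \<le> b + 1) \<or> (x = b + 1 \<and> 1 \<le> y \<and> y \<le> a + 1)"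
  unfolding LR1_def by auto

lemma memR2: "(x, y) \<in> LR2 a b \<longleftrightarrow> (y = b + 1 \<and> 1 \<le> x \<and> x \<le> a + 1) \<or> (x = a + 1 \<and> 1 \<le> y \<and> y \<le> b + 1)"
  unfolding LR2_def by auto

lemma memR3: "(x, y) \<in> LR3 a b \<longleftrightarrow> (y = a + 1 \<and> 1 \<le> x \<and> x \<le> b + 1) \<or> (x = 1 \<and> 1 \<le> y \<and> y \<le> a + 1)"
  unfolding LR3_def by auto

lemma memB: "b \<ge> 0 \<Longrightarrow> (x, y) \<in> board (nat (b + 2)) \<longleftrightarrow> 1 \<le> x \<and> x \<le> b + 2 \<and> 1 \<le> y \<and> y \<le> b + 2"
  unfolding board_def by auto

lemmas mems = mem_shift memL memR1 memR2 memR3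

lemma disj_iff: "A \<inter> B = {} \<longleftrightarrow> (\<forall>x y. (x, y) \<in> A \<longrightarrow> (x, y) \<notin> B)"
  by auto

lemma card_L: "b \<ge> 1 \<Longrightarrow> card (Lpoly 1 b) = nat (b + 2)"
proof -
  assume b: "b \<ge> 1"
  have e: "Lpoly 1 b = insert (2, 1) ((\<lambda>j. (1, j)) ` {1..b+1})"
    using b by (auto simp: memL image_iff)
  have "card ((\<lambda>j. (1::int, j)) ` {1..b+1}) = nat (b + 1)"
    by (subst card_image) (auto simp: inj_on_def)
  moreover have "(2::int, 1::int) \<notin> (\<lambda>j. (1::int, j)) ` {1..b+1}" by auto
  ultimately show ?thesis unfolding e using b by (simp add: card_insert_if nat_add_distrib)
qed

lemma copy_shift: "R \<in> {Lpoly a b, LR1 a b, LR2 a b, LR3 a b} \<Longrightarrow> shift R c d \<in> free_copies_L a b"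
  unfolding free_copies_L_def by blast

lemma copies_E:
  assumes "P \<in> free_copies_L a b"
  obtains c d where "P = shift (Lpoly a b) c d" | c d where "P = shift (LR1 a b) c d"
    | c d where "P = shift (LR2 a b) c d" | c d where "P = shift (LR3 a b) c d"
  using assms unfolding free_copies_L_def by blast

lemma copy_nonempty:
  assumes "b \<ge> 1" "P \<in> free_copies_L 1 b"
  shows "P \<noteq> {}"
  using assms(2)
proof (cases rule: copies_E)
  case (1 c d) then have "(c + 1, d + 1) \<in> P" by (simp add: mems)
  then show ?thesis by auto
next
  case (2 c d) then have "(c + 1, d + 1) \<in> P" using assms(1) by (simp add: mems)
  then show ?thesis by auto
next
  case (3 c d) then have "(c + 2, d + 1) \<in> P" using assms(1) by (simp add: mems)
  then show ?thesis by auto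
next
  case (4 c d) then have "(c + 1, d + 1) \<in> P" using assms(1) by (simp add: mems)
  then show ?thesis by auto
qed

lemma sub_iff: "A \<subseteq> B \<longleftrightarrow> (\<forall>x y. (x, y) \<in> A \<longrightarrow> (x, y) \<in> B)"
  by auto

lemma exists_other:
  assumes b: "b \<ge> 1" and P: "P \<in> free_copies_L 1 b" and sub: "P \<subseteq> board (nat (b + 2))"
  shows "\<exists>Q\<in>free_copies_L 1 b. Q \<subseteq> board (nat (b + 2)) \<and> P \<inter> Q = {}"
proof -
  define QL where "QL = shift (Lpoly 1 b) 0 0"
  define QR where "QR = shift (LR2 1 b) b 1"
  define QT where "QT = shift (LR1 1 b) 1 0"
  define QB where "QB = shift (LR3 1 b) 0 b"
  have c: "QL \<in> free_copies_L 1 b" "QR \<in> free_copies_L 1 b" "QT \<in> free_copies_L 1 b" "QB \<in> free_copies_L 1 b"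
    unfolding QL_def QR_def QT_def QB_def by (auto intro: copy_shift)
  have s: "QL \<subseteq> board (nat (b + 2))" "QR \<subseteq> board (nat (b + 2))" "QT \<subseteq> board (nat (b + 2))" "QB \<subseteq> board (nat (b + 2))"
    unfolding QL_def QR_def QT_def QB_def sub_iff using b by (auto simp: mems memB)
  have bd: "1 \<le> x \<and> x \<le> b + 2 \<and> 1 \<le> y \<and> y \<le> b + 2" if "(x, y) \<in> P" for x y
  proof -
    have "(x, y) \<in> board (nat (b + 2))" using sub that by blast
    then show ?thesis using memB[of b x y] b by simp
  qed
  from P show ?thesis
  proof (cases rule: copies_E)
    case (1 c d)
    have h: "(c + 1, d + 1) \<in> P" "(c + 2, d + 1) \<in> P" "(c + 1, d + b + 1) \<in> P"
      using b unfolding 1 by (auto simp: mems)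
    have r: "0 \<le> c" "c \<le> b" "0 \<le> d" "d \<le> 1" using bd[OF h(1)] bd[OF h(2)] bd[OF h(3)] by auto
    show ?thesis
    proof (cases "c = b \<and> d = 1")
      case True
      have "P \<inter> QL = {}" unfolding 1 QL_def disj_iff using b r True by (simp add: mems; (intro allI conjI impI; linarith)?)
      then show ?thesis using c s by blast
    next
      case False
      have "P \<inter> QR = {}" unfolding 1 QR_def disj_iff using b r False by (simp add: mems; (intro allI conjI impI; linarith)?)
      then show ?thesis using c s by blast
    qed
  next
    case (2 c d)
    have h: "(c + 1, d + 1) \<in> P" "(c + b + 1, d + 1) \<in> P" "(c + b + 1, d + 2) \<in> P"
      using b unfolding 2 by (auto simp: mems)
    have r: "0 \<le> c" "c \<le> 1" "0 \<le> d" "d \<le> b" using bd[OF h(1)] bd[OF h(2)] bd[OF h(3)] by auto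
    show ?thesis
    proof (cases "c = 0 \<and> d = b")
      case True
      have "P \<inter> QT = {}" unfolding 2 QT_def disj_iff using b r True by (simp add: mems; (intro allI conjI impI; linarith)?)
      then show ?thesis using c s by blast
    next
      case False
      show ?thesis
      proof (cases "c = 1")
        case True
        have "P \<inter> QB = {}" unfolding 2 QB_def disj_iff using b r True by (simp add: mems; (intro allI conjI impI; linarith)?)
        then show ?thesis using c s by blast
      next
        case F2: False
        have "P \<inter> QR = {}" unfolding 2 QR_def disj_iff using b r False F2 by (simp add: mems; (intro allI conjI impI; linarith)?)
        then show ?thesis using c s by blast
      qed
    qed
  next
    case (3 c d)
    have h: "(c + 1, d + b + 1) \<in> P" "(c + 2, d + 1) \<in> P" "(c + 2, d + b + 1) \<in> P"
      using b unfolding 3 by (auto simp: mems)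
    have r: "0 \<le> c" "c \<le> b" "0 \<le> d" "d \<le> 1" using bd[OF h(1)] bd[OF h(2)] bd[OF h(3)] by auto
    show ?thesis
    proof (cases "c = 0 \<and> d = 0")
      case True
      have "P \<inter> QR = {}" unfolding 3 QR_def disj_iff using b r True by (simp add: mems; (intro allI conjI impI; linarith)?)
      then show ?thesis using c s by blast
    next
      case False
      have "P \<inter> QL = {}" unfolding 3 QL_def disj_iff using b r False by (simp add: mems; (intro allI conjI impI; linarith)?)
      then show ?thesis using c s by blast
    qed
  next
    case (4 c d)
    have h: "(c + 1, d + 1) \<in> P" "(c + 1, d + 2) \<in> P" "(c + b + 1, d + 2) \<in> P"
      using b unfolding 4 by (auto simp: mems)
    have r: "0 \<le> c" "c \<le> 1" "0 \<le> d" "d \<le> b" using bd[OF h(1)] bd[OF h(2)] bd[OF h(3)] by auto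
    show ?thesis
    proof (cases "c = 1 \<and> d = 0")
      case True
      have "P \<inter> QB = {}" unfolding 4 QB_def disj_iff using b r True by (simp add: mems; (intro allI conjI impI; linarith)?)
      then show ?thesis using c s by blast
    next
      case False
      have "P \<inter> QT = {}" unfolding 4 QT_def disj_iff using b r False by (simp add: mems; (intro allI conjI impI; linarith)?)
      then show ?thesis using c s by blast
    qed
  qed
qed

lemma board_eq: "board n = {1..int n} \<times> {1..int n}"
  unfolding board_def by auto

lemma finite_board: "finite (board n)"
  unfolding board_eq by simp

lemma bd_of:
  assumes b: "b \<ge> 1" and sub: "P \<subseteq> board (nat (b + 2))" and p: "(x, y) \<in> P"
  shows "1 \<le> x \<and> x \<le> b + 2 \<and> 1 \<le> y \<and> y \<le> b + 2"
proof -
  have "(x, y) \<in> board (nat (b + 2))" using sub p by blast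
  then show ?thesis using memB[of b x y] b by simp
qed

lemma hpair:
  assumes b: "b \<ge> 1" and Q: "Q \<in> free_copies_L 1 b"
  shows "\<exists>x y. (x, y) \<in> Q \<and> (x + 1, y) \<in> Q"
  using Q
proof (cases rule: copies_E)
  case (1 c d) then show ?thesis using b by (intro exI[of _ "c + 1"] exI[of _ "d + 1"]) (simp add: mems)
next
  case (2 c d) then show ?thesis using b by (intro exI[of _ "c + 1"] exI[of _ "d + 1"]) (simp add: mems)
next
  case (3 c d) then show ?thesis using b by (intro exI[of _ "c + 1"] exI[of _ "d + b + 1"]) (simp add: mems)
next
  case (4 c d) then show ?thesis using b by (intro exI[of _ "c + 1"] exI[of _ "d + 2"]) (simp add: mems)
qed

lemma bar:
  assumes b: "b \<ge> 1" and Q: "Q \<in> free_copies_L 1 b"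
  shows "\<exists>x y. ((x, y) \<in> Q \<and> (x, y + b) \<in> Q) \<or> ((x, y) \<in> Q \<and> (x + b, y) \<in> Q)"
  using Q
proof (cases rule: copies_E)
  case (1 c d) then show ?thesis using b by (intro exI[of _ "c + 1"] exI[of _ "d + 1"]) (simp add: mems)
next
  case (2 c d) then show ?thesis using b by (intro exI[of _ "c + 1"] exI[of _ "d + 1"]) (simp add: mems)
next
  case (3 c d) then show ?thesis using b by (intro exI[of _ "c + 2"] exI[of _ "d + 1"]) (simp add: mems)
next
  case (4 c d) then show ?thesis using b by (intro exI[of _ "c + 1"] exI[of _ "d + 2"]) (simp add: mems)
qed

lemma border_cell:
  assumes b: "b \<ge> 1" and Q: "Q \<in> free_copies_L 1 b" and sub: "Q \<subseteq> board (nat (b + 2))"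
  shows "\<exists>x y. (x, y) \<in> Q \<and> 1 \<le> x \<and> x \<le> b + 2 \<and> 1 \<le> y \<and> y \<le> b + 2 \<and>
     (x = 1 \<or> x = b + 2 \<or> y = 1 \<or> y = b + 2)"
proof -
  obtain x y where "((x, y) \<in> Q \<and> (x, y + b) \<in> Q) \<or> ((x, y) \<in> Q \<and> (x + b, y) \<in> Q)"
    using bar[OF b Q] by blast
  then show ?thesis
  proof
    assume h: "(x, y) \<in> Q \<and> (x, y + b) \<in> Q"
    have r1: "1 \<le> x \<and> x \<le> b + 2 \<and> 1 \<le> y \<and> y \<le> b + 2" using bd_of[OF b sub] h by blast
    have r2: "1 \<le> x \<and> x \<le> b + 2 \<and> 1 \<le> y + b \<and> y + b \<le> b + 2" using bd_of[OF b sub] h by blast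
    show ?thesis
    proof (cases "y = 1")
      case True then show ?thesis using h r1 by blast
    next
      case False then have "y + b = b + 2" using r1 r2 by linarith
      then show ?thesis using h r2 by (metis add.commute)
    qed
  next
    assume h: "(x, y) \<in> Q \<and> (x + b, y) \<in> Q"
    have r1: "1 \<le> x \<and> x \<le> b + 2 \<and> 1 \<le> y \<and> y \<le> b + 2" using bd_of[OF b sub] h by blast
    have r2: "1 \<le> x + b \<and> x + b \<le> b + 2 \<and> 1 \<le> y \<and> y \<le> b + 2" using bd_of[OF b sub] h by blast
    show ?thesis
    proof (cases "x = 1")
      case True then show ?thesis using h r1 by blast
    next
      case False then have "x + b = b + 2" using r1 r2 by linarith
      then show ?thesis using h r2 by (metis add.commute)
    qed
  qed
qed

lemma not_valid_insert:
  assumes "Q \<notin> S" "P \<in> S" "z \<in> Q" "z \<in> P"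
  shows "\<not> valid_arrangement n (insert Q S)"
proof -
  have "P \<noteq> Q" using assms by blast
  then show ?thesis using assms unfolding valid_arrangement_def by blast
qed

lemma valid4: assumes "A \<subseteq> board n" "B \<subseteq> board n" "C \<subseteq> board n" "D \<subseteq> board n" and dj: "A \<inter> B = {}" "A \<inter> C = {}" "A \<inter> D = {}" "B \<inter> C = {}" "B \<inter> D = {}" "C \<inter> D = {}"
 shows "valid_arrangement n {A,B,C,D}"
proof -
  have "B \<inter> A = {}" "C \<inter> A = {}" "D \<inter> A = {}" "C \<inter> B = {}" "D \<inter> B = {}" "D \<inter> C = {}"
    using dj by blast+
  then show ?thesis unfolding valid_arrangement_def using assms by simp
qed

lemma card4: "card {A,B,C,D} \<le> 4"
  using card_length[of "[A,B,C,D]"] by simp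

lemma border_big:
  assumes b: "b \<ge> 2" and h: "1 \<le> x" "x \<le> b + 2" "1 \<le> y" "y \<le> b + 2" "x = 1 \<or> x = b + 2 \<or> y = 1 \<or> y = b + 2"
  shows "(x, y) \<in> shift (Lpoly 1 b) 0 1 \<or> (x, y) \<in> shift (LR2 1 b) b 0 \<or> (x, y) \<in> shift (LR1 1 b) 0 0 \<or> (x, y) \<in> shift (LR3 1 b) 1 b"
proof -
  have "(x = 1 \<and> 2 \<le> y) \<or> (x = b+2 \<and> y \<le> b+1) \<or> (y = 1 \<and> x \<le> b+1) \<or> (y = b+2 \<and> 2 \<le> x)"
    using h b by presburger
  then show ?thesis
  proof (elim disjE)
    assume "x = 1 \<and> 2 \<le> y" then show ?thesis using h b by (simp add: mems; arith)
  next
    assume "x = b+2 \<and> y \<le> b+1" then show ?thesis using h b by (simp add: mems; arith)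
  next
    assume "y = 1 \<and> x \<le> b+1" then show ?thesis using h b by (simp add: mems; arith)
  next
    assume "y = b+2 \<and> 2 \<le> x" then show ?thesis using h b by (simp add: mems; arith)
  qed
qed

lemma pack_big:
  assumes b: "b \<ge> 2"
  shows "\<exists>S. free_packing_L 1 b S \<and> card S \<le> 4"
proof -
  define A where "A = shift (Lpoly 1 b) 0 1"
  define B where "B = shift (LR2 1 b) b 0"
  define C where "C = shift (LR1 1 b) 0 0"
  define D where "D = shift (LR3 1 b) 1 b"
  define S where "S = {A, B, C, D}"
  have b1: "b \<ge> 1" using b by simp
  have cp: "S \<subseteq> free_copies_L 1 b"
    unfolding S_def A_def B_def C_def D_def by (auto intro: copy_shift)
  have sb: "A \<subseteq> board (nat (b + 2))" "B \<subseteq> board (nat (b + 2))" "C \<subseteq> board (nat (b + 2))" "D \<subseteq> board (nat (b + 2))"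
    unfolding A_def B_def C_def D_def sub_iff using b by (auto simp: mems memB)
  have dj: "A \<inter> B = {}" "A \<inter> C = {}" "A \<inter> D = {}" "B \<inter> C = {}" "B \<inter> D = {}" "C \<inter> D = {}"
    unfolding A_def B_def C_def D_def disj_iff using b
    by (simp add: mems; (intro allI conjI impI; linarith)?)+
  have va: "valid_arrangement (nat (b + 2)) S"
    unfolding S_def by (rule valid4[OF sb dj])
  have mx: "\<not> valid_arrangement (nat (b + 2)) (insert Q S)" if Q: "Q \<in> free_copies_L 1 b" "Q \<notin> S" for Q
  proof (cases "Q \<subseteq> board (nat (b + 2))")
    case False then show ?thesis unfolding valid_arrangement_def by blast
  next
    case True
    obtain x y where xy: "(x, y) \<in> Q" "1 \<le> x" "x \<le> b + 2" "1 \<le> y" "y \<le> b + 2"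
      "x = 1 \<or> x = b + 2 \<or> y = 1 \<or> y = b + 2"
      using border_cell[OF b1 Q(1) True] by blast
    have "(x, y) \<in> A \<or> (x, y) \<in> B \<or> (x, y) \<in> C \<or> (x, y) \<in> D"
      unfolding A_def B_def C_def D_def using border_big[OF b xy(2-6)] .
    then obtain P where "P \<in> S" "(x, y) \<in> P" unfolding S_def by blast
    then show ?thesis using not_valid_insert[OF Q(2)] xy(1) by blast
  qed
  have "free_packing_L 1 b S"
    unfolding free_packing_L_def Let_def card_L[OF b1] using cp va mx by blast
  moreover have "card S \<le> 4" unfolding S_def by (rule card4)
  ultimately show ?thesis by blast
qed

lemma pack_one: "\<exists>S. free_packing_L 1 1 S \<and> card S \<le> 4"
proof -
  define A where "A = shift (Lpoly 1 1) 0 0"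
  define B where "B = shift (LR2 1 1) 1 1"
  define S where "S = {A, B}"
  have cp: "S \<subseteq> free_copies_L 1 1"
    unfolding S_def A_def B_def by (auto intro: copy_shift)
  have sb: "A \<subseteq> board (nat (1 + 2))" "B \<subseteq> board (nat (1 + 2))"
    unfolding A_def B_def sub_iff by (auto simp: mems board_def)
  have dj: "A \<inter> B = {}" "B \<inter> A = {}"
    unfolding A_def B_def disj_iff by (simp add: mems; (intro allI conjI impI; linarith)?)+
  have va: "valid_arrangement (nat (1 + 2)) S"
    unfolding S_def valid_arrangement_def using sb dj by auto
  have cov: "(x, y) \<in> A \<or> (x, y) \<in> B \<or> (x + 1, y) \<in> A \<or> (x + 1, y) \<in> B"
    if "1 \<le> x" "x \<le> 2" "1 \<le> y" "y \<le> 3" for x y :: int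
  proof -
    have "x = 1 \<or> x = 2" "y = 1 \<or> y = 2 \<or> y = 3" using that by arith+
    then show ?thesis unfolding A_def B_def by (elim disjE; simp add: mems)
  qed
  have mx: "\<not> valid_arrangement (nat (1 + 2)) (insert Q S)" if Q: "Q \<in> free_copies_L 1 1" "Q \<notin> S" for Q
  proof (cases "Q \<subseteq> board (nat (1 + 2))")
    case False then show ?thesis unfolding valid_arrangement_def by blast
  next
    case True
    obtain x y where xy: "(x, y) \<in> Q" "(x + 1, y) \<in> Q" using hpair[OF _ Q(1)] by auto
    have r1: "1 \<le> x \<and> x \<le> 1 + 2 \<and> 1 \<le> y \<and> y \<le> 1 + 2" using bd_of[OF _ True xy(1)] by simp
    have r2: "1 \<le> x + 1 \<and> x + 1 \<le> 1 + 2" using bd_of[OF _ True xy(2)] by simp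
    have "(x, y) \<in> A \<or> (x, y) \<in> B \<or> (x + 1, y) \<in> A \<or> (x + 1, y) \<in> B"
      using cov r1 r2 by simp
    then obtain P z where "P \<in> S" "z \<in> P" "z \<in> Q" unfolding S_def using xy by blast
    then show ?thesis using not_valid_insert[OF Q(2)] by blast
  qed
  have "free_packing_L 1 1 S"
    unfolding free_packing_L_def Let_def card_L[OF order.refl] using cp va mx by blast
  moreover have "card S \<le> 4" unfolding S_def using card_length[of "[A,B]"] by simp
  ultimately show ?thesis by blast
qed

lemma pack_exists: "b \<ge> 1 \<Longrightarrow> \<exists>S. free_packing_L 1 b S \<and> card S \<le> 4"
  using pack_one pack_big by (cases "b = 1") auto

lemma lower:
  assumes b: "b \<ge> 1" and pk: "free_packing_L 1 b S"
  shows "2 \<le> card S"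
proof -
  have cp: "S \<subseteq> free_copies_L 1 b" and va: "valid_arrangement (nat (b + 2)) S"
    and mx: "\<And>Q. Q \<in> free_copies_L 1 b \<Longrightarrow> Q \<notin> S \<Longrightarrow> \<not> valid_arrangement (nat (b + 2)) (insert Q S)"
    using pk unfolding free_packing_L_def Let_def card_L[OF b] by blast+
  have "S \<subseteq> Pow (board (nat (b + 2)))" using va unfolding valid_arrangement_def by blast
  then have fin: "finite S" using finite_board finite_Pow_iff finite_subset by metis
  show ?thesis
  proof (rule ccontr)
    assume "\<not> 2 \<le> card S"
    then have "card S = 0 \<or> card S = 1" by arith
    then show False
    proof
      assume "card S = 0"
      then have S: "S = {}" using fin by simp
      define Q where "Q = shift (Lpoly 1 b) 0 0"
      have "Q \<in> free_copies_L 1 b" unfolding Q_def by (auto intro: copy_shift)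
      moreover have "Q \<subseteq> board (nat (b + 2))" unfolding Q_def sub_iff using b by (auto simp: mems memB)
      ultimately show False using mx[of Q] unfolding S valid_arrangement_def by auto
    next
      assume "card S = 1"
      then obtain P where S: "S = {P}" by (rule card_1_singletonE)
      have P: "P \<in> free_copies_L 1 b" "P \<subseteq> board (nat (b + 2))" using cp va unfolding S valid_arrangement_def by auto
      obtain Q where Q: "Q \<in> free_copies_L 1 b" "Q \<subseteq> board (nat (b + 2))" "P \<inter> Q = {}"
        using exists_other[OF b P] by blast
      have "Q \<noteq> P" using Q(3) copy_nonempty[OF b Q(1)] by blast
      then have "valid_arrangement (nat (b + 2)) (insert Q S)"
        unfolding S valid_arrangement_def using P Q by blast
      then show False using mx[OF Q(1)] \<open>Q \<noteq> P\<close> unfolding S by blast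
    qed
  qed
qed

theorem corollary1:
  fixes b :: int
  assumes "b \<ge> 1"
  shows "2 \<le> cp_free_L 1 b \<and> cp_free_L 1 b \<le> 4"
proof -
  obtain S0 where S0: "free_packing_L 1 b S0" "card S0 \<le> 4" using pack_exists[OF assms] by blast
  have ex: "\<exists>k. \<exists>S. free_packing_L 1 b S \<and> card S = k" using S0 by blast
  have "cp_free_L 1 b \<le> card S0" unfolding cp_free_L_def by (rule Least_le) (use S0 in blast)
  moreover obtain S where "free_packing_L 1 b S" "card S = cp_free_L 1 b"
    using LeastI_ex[OF ex] unfolding cp_free_L_def by blast
  then have "2 \<le> cp_free_L 1 b" using lower[OF assms] by metis
  ultimately show ?thesis using S0 by linarith
qed

end
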